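(* Let $g:\mathbb{R}\times(0,\infty)\times\mathbb{R}\to\mathbb{R}^2$ be the Kalman-filter update of a univariate Gaussian belief $b=(\mu,s)^{\mathrm{T}}$ (mean $\mu\in\mathbb{R}$, variance $s>0$) given an observation $y=x+w$ of the scalar state $x$ corrupted by noise $w\sim\mathcal{N}(0,1)$, i.e. $$g(b,y)=\left(\mu+\frac{s}{s+1}(y-\mu),\; s-\frac{s^2}{s+1}\right)^{\mathrm{T}}.$$ Then there exist constants $K_2,K_3,K_4,K_5\ge0$ and positive integers $L_1,L_2$ such that for all $\mu\in\mathbb{R}$, $s>0$, $y\in\mathbb{R}$, $$\|g(b,y)\|_2\le K_2+K_3\|b\|_2^{L_1}+K_4\|y\|_2^{L_2}+K_5\|b\|_2^{L_1}\|y\|_2^{L_2}$$ and $$\left\|\frac{\partial}{\partial b}g(b,y)\right\|_2\le K_2+K_3\|b\|_2^{L_1}+K_4\|y\|_2^{L_2}+K_5\|b\|_2^{L_1}\|y\|_2^{L_2}.$$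
   Context: $\|\cdot\|_2$ on matrices denotes the operator (spectral) norm induced by the Euclidean norm. *)

theory Defs
  imports "HOL-Analysis.Analysis"
begin

text \<open>Kalman-filter update of a univariate Gaussian belief b = (mu, s), with
  b$1 = mu (mean) and b$2 = s (variance), given observation y = x + w, w ~ N(0,1).\<close>
definition kalman_update :: "real^2 \<Rightarrow> real \<Rightarrow> real^2" where
  "kalman_update b y =
     vector [b$1 + b$2 / (b$2 + 1) * (y - b$1), b$2 - (b$2)^2 / (b$2 + 1)]"

end

theory Submission
  imports Defs
begin

lemma ku: "kalman_update c y = ((c$1 + c$2*y)/(c$2+1)) *\<^sub>R axis 1 1 + (c$2/(c$2+1)) *\<^sub>R axis 2 1" if nz: "c$2+1 \<noteq> 0"
proof -
  have e1: "c$1 + c$2/(c$2+1)*(y-c$1) = (c$1 + c$2*y)/(c$2+1)"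
  proof -
    have nz': "1 + c$2 \<noteq> 0" using nz by simp
    have "c$1 + c$2/(c$2+1)*(y-c$1) = (c$1*(c$2+1) + c$2*(y-c$1))/(c$2+1)"
      using nz nz' by (simp add: field_simps)
    also have "c$1*(c$2+1) + c$2*(y-c$1) = c$1 + c$2*y" by algebra
    finally show ?thesis .
  qed
  have e2: "c$2 - (c$2)^2/(c$2+1) = c$2/(c$2+1)"
  proof -
    have "c$2 - (c$2)^2/(c$2+1) = (c$2*(c$2+1) - (c$2)^2)/(c$2+1)"
      using nz by (simp add: diff_divide_eq_iff)
    also have "c$2*(c$2+1) - (c$2)^2 = c$2" by (simp add: power2_eq_square algebra_simps)
    finally show ?thesis .
  qed
  show ?thesis unfolding kalman_update_def vec_eq_iff forall_2 using e1 e2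
    by (simp add: axis_def)
qed

lemma hd_nth[derivative_intros]: "((\<lambda>c::real^2. c$i) has_derivative (\<lambda>h. h$i)) F"
  using bounded_linear.has_derivative[OF bounded_linear_vec_nth has_derivative_ident] .

definition kD :: "real^2 \<Rightarrow> real \<Rightarrow> real^2 \<Rightarrow> real^2" where
  "kD b y h = (h$1/(b$2+1) + h$2*(y-b$1)/(b$2+1)^2) *\<^sub>R axis 1 1 + (h$2/(b$2+1)^2) *\<^sub>R axis 2 1"

lemma kd: assumes pos: "b$2 > 0" shows "((\<lambda>c. kalman_update c y) has_derivative kD b y) (at b)"
proof -
  have nz: "b$2+1 \<noteq> 0" using pos by simp
  have bb: "0 < b$2 * b$2" using pos by (simp add: mult_pos_pos)
  have n1: "1 + (2*b$2 + b$2*b$2) \<noteq> 0" using pos bb by linarith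
  have n2: "(1 + b$2)^2 \<noteq> 0" using pos by simp
  have p2: "0 < (1 + b$2)^2" using pos by simp
  have p3: "0 \<le> b$2*(1 + b$2)^2" using pos by simp
  have n3: "(1 + b$2)^2 + b$2*(1 + b$2)^2 \<noteq> 0" using p2 p3 by linarith
  have "((\<lambda>c. ((c$1 + c$2*y)/(c$2+1)) *\<^sub>R axis 1 1 + (c$2/(c$2+1)) *\<^sub>R axis 2 1) has_derivative kD b y) (at b)"
    unfolding kD_def
    apply (auto intro!: derivative_eq_intros simp: nz)
    apply (rule ext)
    apply (simp add: vec_eq_iff forall_2 axis_def)
    using nz n1 n2 n3 apply (simp add: field_simps)
    apply (simp add: algebra_simps power2_eq_square)
    done
  then show ?thesis
    apply (rule has_derivative_transform_within_open[where s="{c. c$2 > -1}"])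
    using pos apply (auto intro!: open_halfspace_component_gt_cart ku[symmetric])
    done
qed

theorem proposition1:
  shows "\<exists>K2 K3 K4 K5 :: real. \<exists>L1 L2 :: nat.
    K2 \<ge> 0 \<and> K3 \<ge> 0 \<and> K4 \<ge> 0 \<and> K5 \<ge> 0 \<and> L1 > 0 \<and> L2 > 0 \<and>
    (\<forall>(b::real^2) (y::real). b$2 > 0 \<longrightarrow>
       norm (kalman_update b y)
         \<le> K2 + K3 * norm b ^ L1 + K4 * \<bar>y\<bar> ^ L2 + K5 * norm b ^ L1 * \<bar>y\<bar> ^ L2 \<and>
       (\<lambda>c. kalman_update c y) differentiable (at b) \<and>
       onorm (frechet_derivative (\<lambda>c. kalman_update c y) (at b))
         \<le> K2 + K3 * norm b ^ L1 + K4 * \<bar>y\<bar> ^ L2 + K5 * norm b ^ L1 * \<bar>y\<bar> ^ L2)"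
proof (intro exI conjI allI impI)
  fix b :: "real^2" and y :: real
  assume pos: "b$2 > 0"
  define s where "s = b$2"
  define m where "m = b$1"
  have sp: "s > 0" using pos s_def by simp
  have ms: "\<bar>m\<bar> \<le> norm b" unfolding m_def by (rule component_le_norm_cart)
  have nby: "0 \<le> norm b * \<bar>y\<bar>" by simp
  have nz: "b$2 + 1 \<noteq> 0" using pos by simp
  have eq: "kalman_update b y = ((m + s*y)/(s+1)) *\<^sub>R axis 1 1 + (s/(s+1)) *\<^sub>R axis 2 1"
    using ku[OF nz] unfolding s_def m_def .
  have A: "\<bar>(m + s*y)/(s+1)\<bar> \<le> \<bar>m\<bar> + \<bar>y\<bar>"
  proof -
    have "\<bar>m + s*y\<bar> \<le> \<bar>m\<bar> + s*\<bar>y\<bar>" using sp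
      by (metis abs_mult abs_of_pos abs_triangle_ineq)
    also have "\<dots> \<le> (\<bar>m\<bar> + \<bar>y\<bar>) * (s+1)" using sp
      by (simp add: algebra_simps)
    finally have "\<bar>m + s*y\<bar> \<le> (\<bar>m\<bar> + \<bar>y\<bar>) * (s+1)" .
    then show ?thesis using sp by (simp add: abs_divide pos_divide_le_eq)
  qed
  have B: "\<bar>s/(s+1)\<bar> \<le> 1" using sp by (simp add: abs_divide pos_divide_le_eq)
  have "norm (kalman_update b y) \<le> \<bar>(m + s*y)/(s+1)\<bar> + \<bar>s/(s+1)\<bar>"
    unfolding eq by (rule order_trans[OF norm_triangle_ineq]) simp
  also have "\<dots> \<le> 2 + norm b + \<bar>y\<bar> + norm b * \<bar>y\<bar>"
    using A B ms nby by linarith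
  finally show "norm (kalman_update b y) \<le> 2 + 1 * norm b ^ 1 + 1 * \<bar>y\<bar> ^ 1 + 1 * norm b ^ 1 * \<bar>y\<bar> ^ 1"
    by simp
  have D: "((\<lambda>c. kalman_update c y) has_derivative kD b y) (at b)" using kd[OF pos] .
  then show "(\<lambda>c. kalman_update c y) differentiable (at b)" by (rule differentiableI)
  have fd: "frechet_derivative (\<lambda>c. kalman_update c y) (at b) = kD b y"
    using frechet_derivative_at[OF D] by simp
  have d1: "\<bar>u/(s+1)\<bar> \<le> \<bar>u\<bar>" for u
  proof -
    have "\<bar>u\<bar> * 1 \<le> \<bar>u\<bar> * (s+1)" using sp by (intro mult_left_mono) auto
    then show ?thesis using sp by (simp add: abs_divide pos_divide_le_eq)
  qed
  have d2: "\<bar>u/(s+1)^2\<bar> \<le> \<bar>u\<bar>" for u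
  proof -
    have "1 \<le> (s+1)^2" using sp by (simp add: one_le_power)
    then have "\<bar>u\<bar> * 1 \<le> \<bar>u\<bar> * (s+1)^2" by (intro mult_left_mono) auto
    then show ?thesis using sp by (simp add: abs_divide pos_divide_le_eq)
  qed
  have "onorm (kD b y) \<le> 2 + norm b + \<bar>y\<bar> + norm b * \<bar>y\<bar>"
  proof (rule onorm_le)
    fix h :: "real^2"
    have h1: "\<bar>h$1\<bar> \<le> norm h" by (rule component_le_norm_cart)
    have h2: "\<bar>h$2\<bar> \<le> norm h" by (rule component_le_norm_cart)
    have kk: "kD b y h = (h$1/(s+1) + h$2*(y-m)/(s+1)^2) *\<^sub>R axis 1 1 + (h$2/(s+1)^2) *\<^sub>R axis 2 1"
      unfolding kD_def s_def m_def ..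
    have "norm (kD b y h) \<le> \<bar>h$1/(s+1) + h$2*(y-m)/(s+1)^2\<bar> + \<bar>h$2/(s+1)^2\<bar>"
      unfolding kk by (rule order_trans[OF norm_triangle_ineq]) simp
    also have "\<dots> \<le> \<bar>h$1/(s+1)\<bar> + \<bar>h$2*(y-m)/(s+1)^2\<bar> + \<bar>h$2/(s+1)^2\<bar>"
      using abs_triangle_ineq[of "h$1/(s+1)" "h$2*(y-m)/(s+1)^2"] by linarith
    also have "\<dots> \<le> \<bar>h$1\<bar> + \<bar>h$2*(y-m)\<bar> + \<bar>h$2\<bar>"
      using d1[of "h$1"] d2[of "h$2*(y-m)"] d2[of "h$2"] by linarith
    also have "\<dots> \<le> norm h * (2 + \<bar>y\<bar> + norm b)"
    proof -
      have "\<bar>h$2*(y-m)\<bar> = \<bar>h$2\<bar> * \<bar>y-m\<bar>" by (simp add: abs_mult)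
      also have "\<dots> \<le> norm h * (\<bar>y\<bar> + norm b)"
        using h2 ms by (intro mult_mono) auto
      finally have "\<bar>h$2*(y-m)\<bar> \<le> norm h * (\<bar>y\<bar> + norm b)" .
      then show ?thesis using h1 h2 by (simp add: algebra_simps)
    qed
    also have "\<dots> \<le> (2 + norm b + \<bar>y\<bar> + norm b * \<bar>y\<bar>) * norm h"
      using nby by (simp add: algebra_simps)
    finally show "norm (kD b y h) \<le> (2 + norm b + \<bar>y\<bar> + norm b * \<bar>y\<bar>) * norm h" .
  qed
  then show "onorm (frechet_derivative (\<lambda>c. kalman_update c y) (at b))
         \<le> 2 + 1 * norm b ^ 1 + 1 * \<bar>y\<bar> ^ 1 + 1 * norm b ^ 1 * \<bar>y\<bar> ^ 1"
    unfolding fd by simp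
qed (auto)


end
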